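(* Consider an instance of additive multislope ski rental with states $0,\dots,k$, buying costs $b_0<b_1<\dots<b_k$ and rental rates $r_0>r_1>\dots>r_k\ge 0$, such that $s_1<s_2<\dots<s_k$ where $s_i=\frac{b_i-b_{i-1}}{r_{i-1}-r_i}$. Let $c\ge 1$. If there exists a $c$-competitive profile $p$ all of whose component functions $p_0,\dots,p_k$ are continuous, then there exists a prudent $c$-competitive profile $\tilde p$.
   Context: A profile is a vector $p(t)=(p_0(t),\dots,p_k(t))$ of nonnegative functions of $t\ge0$ with $\sum_{i=0}^kp_i(t)=1$ for all $t$ ($p_i(t)$ is the probability of being in state $i$ at time $t$). Its expected buying cost is $B_p(t)=\sum_ip_i(t)b_i$, its expected rental rate is $R_p(t)=\sum_ip_i(t)r_i$, and its expected total cost is $X_p(t)=B_p(t)+\int_0^tR_p(z)\,dz$. With $\textsc{opt}(t)=\min_i(b_i+r_it)$, a profile is $c$-competitive if $X_p(t)\le c\cdot\textsc{opt}(t)$ for all $t\ge0$. Slope $i$ is active at time $t$ if $p_i(t)>0$; a profile is prudent if at every time $t$ the set of active slopes consists of either one slope or two consecutive slopes $i,i+1$. *)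

theory Defs
  imports "HOL-Analysis.Analysis"
begin

text \<open>States are 0..k; b i buying cost, r i rental rate; a profile is p :: nat => real => real,
  p i t the probability of being in state i at time t (only t >= 0 and i <= k matter).\<close>

definition opt :: "nat \<Rightarrow> (nat \<Rightarrow> real) \<Rightarrow> (nat \<Rightarrow> real) \<Rightarrow> real \<Rightarrow> real" where
  "opt k b r t = Min ((\<lambda>i. b i + r i * t) ` {0..k})"

definition is_profile :: "nat \<Rightarrow> (nat \<Rightarrow> real \<Rightarrow> real) \<Rightarrow> bool" where
  "is_profile k p \<longleftrightarrow> (\<forall>t\<ge>0. (\<forall>i\<le>k. p i t \<ge> 0) \<and> (\<Sum>i\<le>k. p i t) = 1)"

definition buy_cost :: "nat \<Rightarrow> (nat \<Rightarrow> real) \<Rightarrow> (nat \<Rightarrow> real \<Rightarrow> real) \<Rightarrow> real \<Rightarrow> real" where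
  "buy_cost k b p t = (\<Sum>i\<le>k. p i t * b i)"

definition rent_rate :: "nat \<Rightarrow> (nat \<Rightarrow> real) \<Rightarrow> (nat \<Rightarrow> real \<Rightarrow> real) \<Rightarrow> real \<Rightarrow> real" where
  "rent_rate k r p t = (\<Sum>i\<le>k. p i t * r i)"

definition total_cost :: "nat \<Rightarrow> (nat \<Rightarrow> real) \<Rightarrow> (nat \<Rightarrow> real) \<Rightarrow> (nat \<Rightarrow> real \<Rightarrow> real) \<Rightarrow> real \<Rightarrow> real" where
  "total_cost k b r p t = buy_cost k b p t + integral {0..t} (rent_rate k r p)"

definition competitive :: "nat \<Rightarrow> (nat \<Rightarrow> real) \<Rightarrow> (nat \<Rightarrow> real) \<Rightarrow> real \<Rightarrow> (nat \<Rightarrow> real \<Rightarrow> real) \<Rightarrow> bool" where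
  "competitive k b r c p \<longleftrightarrow> is_profile k p \<and>
     (\<forall>t\<ge>0. rent_rate k r p integrable_on {0..t} \<and> total_cost k b r p t \<le> c * opt k b r t)"

definition active :: "nat \<Rightarrow> (nat \<Rightarrow> real \<Rightarrow> real) \<Rightarrow> real \<Rightarrow> nat set" where
  "active k p t = {i. i \<le> k \<and> p i t > 0}"

definition prudent :: "nat \<Rightarrow> (nat \<Rightarrow> real \<Rightarrow> real) \<Rightarrow> bool" where
  "prudent k p \<longleftrightarrow> (\<forall>t\<ge>0. (\<exists>i\<le>k. active k p t = {i}) \<or> (\<exists>i<k. active k p t = {i, Suc i}))"

definition slope_ratio :: "(nat \<Rightarrow> real) \<Rightarrow> (nat \<Rightarrow> real) \<Rightarrow> nat \<Rightarrow> real" where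
  "slope_ratio b r i = (b i - b (i - 1)) / (r (i - 1) - r i)"

end

theory Submission
  imports Defs
begin

definition mm :: "(nat \<Rightarrow> real) \<Rightarrow> (nat \<Rightarrow> real) \<Rightarrow> nat \<Rightarrow> real" where
  "mm b r i = (r (Suc i) - r i) / (b (Suc i) - b i)"

definition LL :: "(nat \<Rightarrow> real) \<Rightarrow> (nat \<Rightarrow> real) \<Rightarrow> nat \<Rightarrow> real \<Rightarrow> real" where
  "LL b r i x = r i + (x - b i) * mm b r i"

primrec Gm :: "(nat \<Rightarrow> real) \<Rightarrow> (nat \<Rightarrow> real) \<Rightarrow> nat \<Rightarrow> real \<Rightarrow> real" where
  "Gm b r 0 x = LL b r 0 x"
| "Gm b r (Suc n) x = max (Gm b r n x) (LL b r (Suc n) x)"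

lemma Gm_ge: "i \<le> n \<Longrightarrow> LL b r i x \<le> Gm b r n x"
  by (induction n) (auto simp: le_Suc_eq max_def)

lemma Gm_attained: "\<exists>i\<le>n. Gm b r n x = LL b r i x"
  by (induction n) (auto simp: max_def intro: le_SucI)

lemma Gm_cont: "continuous_on UNIV (Gm b r n)"
proof (induction n)
  case 0 show ?case unfolding Gm.simps LL_def by (intro continuous_intros)
next
  case (Suc n)
  have "continuous_on UNIV (LL b r (Suc n))" unfolding LL_def by (intro continuous_intros)
  then show ?case using Suc unfolding Gm.simps by (intro continuous_on_max)
qed

lemma mm_step:
  assumes b_mono: "\<And>i. i < k \<Longrightarrow> b i < b (Suc i)"
    and r_mono: "\<And>i. i < k \<Longrightarrow> r i > r (Suc i)"
    and s_mono: "\<And>i. 1 \<le> i \<Longrightarrow> i < k \<Longrightarrow> slope_ratio b r i < slope_ratio b r (Suc i)"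
    and j: "Suc j < k"
  shows "mm b r j < mm b r (Suc j)"
proof -
  have s: "slope_ratio b r (Suc j) < slope_ratio b r (Suc (Suc j))" using s_mono[of "Suc j"] j by simp
  define db where "db = b (Suc j) - b j"
  define dr where "dr = r j - r (Suc j)"
  define db' where "db' = b (Suc (Suc j)) - b (Suc j)"
  define dr' where "dr' = r (Suc j) - r (Suc (Suc j))"
  have p: "db > 0" "dr > 0" "db' > 0" "dr' > 0"
    using b_mono[of j] b_mono[of "Suc j"] r_mono[of j] r_mono[of "Suc j"] j
    by (auto simp: db_def dr_def db'_def dr'_def)
  have "db / dr < db' / dr'" using s by (simp add: slope_ratio_def db_def dr_def db'_def dr'_def)
  hence "db * dr' < db' * dr" using p by (simp add: divide_simps)
  hence "- dr / db < - dr' / db'" using p by (simp add: divide_simps mult.commute)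
  moreover have "mm b r j = - dr / db" "mm b r (Suc j) = - dr' / db'"
    by (simp_all add: mm_def db_def dr_def db'_def dr'_def divide_simps)
  ultimately show ?thesis by simp
qed

lemma mm_mono:
  assumes b_mono: "\<And>i. i < k \<Longrightarrow> b i < b (Suc i)"
    and r_mono: "\<And>i. i < k \<Longrightarrow> r i > r (Suc i)"
    and s_mono: "\<And>i. 1 \<le> i \<Longrightarrow> i < k \<Longrightarrow> slope_ratio b r i < slope_ratio b r (Suc i)"
    and ji: "j \<le> i" and ik: "i < k"
  shows "mm b r j \<le> mm b r i"
  using ji ik
proof (induction i rule: dec_induct)
  case base then show ?case by simp
next
  case (step n)
  have "mm b r n < mm b r (Suc n)" using mm_step[where k=k and b=b and r=r, OF b_mono r_mono s_mono] step by simp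
  then show ?case using step by simp
qed

lemma LL_below:
  assumes b_mono: "\<And>i. i < k \<Longrightarrow> b i < b (Suc i)"
    and r_mono: "\<And>i. i < k \<Longrightarrow> r i > r (Suc i)"
    and s_mono: "\<And>i. 1 \<le> i \<Longrightarrow> i < k \<Longrightarrow> slope_ratio b r i < slope_ratio b r (Suc i)"
    and ik: "i < k" and jk: "j \<le> k"
  shows "LL b r i (b j) \<le> r j"
proof -
  have mmm: "\<And>j i. j \<le> i \<Longrightarrow> i < k \<Longrightarrow> mm b r j \<le> mm b r i"
    by (rule mm_mono[of k b r]) (auto intro: b_mono r_mono s_mono)
  have db: "b (Suc i) - b i > 0" using b_mono[OF ik] by simp
  have rs: "r (Suc i) = r i + (b (Suc i) - b i) * mm b r i"
    using db by (simp add: mm_def)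
  show ?thesis
  proof (cases "Suc i \<le> j")
    case True
    have "r (Suc i) + mm b r i * (b j - b (Suc i)) \<le> r j"
      using True jk
    proof (induction j rule: dec_induct)
      case base then show ?case by simp
    next
      case (step n)
      have n: "n < k" using step by simp
      have "i \<le> n" using step by simp
      from mmm[OF this n] have "mm b r i \<le> mm b r n" .
      moreover have "b (Suc n) - b n > 0" using b_mono[OF n] by simp
      ultimately have "mm b r i * (b (Suc n) - b n) \<le> mm b r n * (b (Suc n) - b n)"
        by (simp add: mult_right_mono)
      moreover have "r (Suc n) = r n + (b (Suc n) - b n) * mm b r n"
        using b_mono[OF n] by (simp add: mm_def)
      ultimately show ?case using step by (simp add: algebra_simps)
    qed
    then show ?thesis unfolding LL_def using rs by (simp add: algebra_simps)
  next
    case False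
    hence ji: "j \<le> i" by simp
    have "r i + mm b r i * (b j - b i) \<le> r j"
      using ji
    proof (induction j rule: inc_induct)
      case base then show ?case by simp
    next
      case (step n)
      have n: "n < k" using step ik by simp
      have "mm b r n \<le> mm b r i" using mmm[of n i] step ik by simp
      moreover have "b (Suc n) - b n > 0" using b_mono[OF n] by simp
      ultimately have "mm b r n * (b (Suc n) - b n) \<le> mm b r i * (b (Suc n) - b n)"
        by (simp add: mult_right_mono)
      moreover have "r (Suc n) = r n + (b (Suc n) - b n) * mm b r n"
        using b_mono[OF n] by (simp add: mm_def)
      ultimately show ?case using step by (simp add: algebra_simps)
    qed
    then show ?thesis unfolding LL_def by (simp add: algebra_simps)
  qed
qed

lemma b_le:
  assumes b_mono: "\<And>i. i < k \<Longrightarrow> b i < b (Suc i)" and "j \<le> i" "i \<le> k"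
  shows "b j \<le> (b i :: real)"
  using assms(2,3)
proof (induction i rule: dec_induct)
  case base then show ?case by simp
next
  case (step n) then show ?case using b_mono[of n] by simp
qed

lemma sum_two:
  assumes "i < k"
  shows "(\<Sum>j\<le>k. (if j = i then l else if j = Suc i then 1 - l else 0) * f j) = l * f i + (1 - l) * (f (Suc i) :: real)"
proof -
  have "(\<lambda>j. (if j = i then l else if j = Suc i then 1 - l else 0) * f j)
      = (\<lambda>j. (if j = i then l * f i else 0) + (if j = Suc i then (1 - l) * f (Suc i) else 0))"
    by auto
  then show ?thesis using assms by (subst \<open>_ = _\<close>) (simp add: sum.distrib)
qed


theorem theorem4p1:
  fixes k :: nat and b r :: "nat \<Rightarrow> real" and c :: real and p :: "nat \<Rightarrow> real \<Rightarrow> real"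
  assumes b_mono: "\<And>i. i < k \<Longrightarrow> b i < b (Suc i)"
    and r_mono: "\<And>i. i < k \<Longrightarrow> r i > r (Suc i)"
    and r_nonneg: "r k \<ge> 0"
    and s_mono: "\<And>i. 1 \<le> i \<Longrightarrow> i < k \<Longrightarrow> slope_ratio b r i < slope_ratio b r (Suc i)"
    and c_ge: "c \<ge> 1"
    and p_comp: "competitive k b r c p"
    and p_cont: "\<And>i. i \<le> k \<Longrightarrow> continuous_on {0..} (p i)"
  shows "\<exists>q. prudent k q \<and> competitive k b r c q"
proof (cases "k = 0")
  case True
  have "prudent k p"
    unfolding prudent_def
  proof (intro allI impI)
    fix t :: real assume t: "t \<ge> 0"
    have "p 0 t = 1" using p_comp t True by (simp add: competitive_def is_profile_def)
    hence "active k p t = {0}" using True by (auto simp: active_def)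
    then show "(\<exists>i\<le>k. active k p t = {i}) \<or> (\<exists>i<k. active k p t = {i, Suc i})" by auto
  qed
  then show ?thesis using p_comp by blast
next
  case False
  hence k: "0 < k" by simp
  have prof: "is_profile k p" and comp: "\<And>t. t \<ge> 0 \<Longrightarrow> rent_rate k r p integrable_on {0..t} \<and> total_cost k b r p t \<le> c * opt k b r t"
    using p_comp by (auto simp: competitive_def)
  define B where "B = buy_cost k b p"
  define seg where "seg x = (LEAST i. x \<le> b (Suc i))" for x
  define lam where "lam x = (b (Suc (seg x)) - x) / (b (Suc (seg x)) - b (seg x))" for x
  define q where "q j t = (if j = seg (B t) then lam (B t) else if j = Suc (seg (B t)) then 1 - lam (B t) else 0)" for j t
  have bound: "b 0 \<le> B t \<and> B t \<le> b k" if t: "t \<ge> 0" for t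
  proof -
    have pn: "\<And>j. j \<le> k \<Longrightarrow> p j t \<ge> 0" and ps: "(\<Sum>j\<le>k. p j t) = 1"
      using prof t by (auto simp: is_profile_def)
    have "(\<Sum>j\<le>k. p j t * b 0) \<le> (\<Sum>j\<le>k. p j t * b j)"
      by (intro sum_mono mult_left_mono b_le[of k b] b_mono) (auto intro: pn)
    moreover have "(\<Sum>j\<le>k. p j t * b j) \<le> (\<Sum>j\<le>k. p j t * b k)"
      by (intro sum_mono mult_left_mono b_le[of k b] b_mono) (auto intro: pn)
    ultimately show ?thesis using ps by (simp add: B_def buy_cost_def sum_distrib_right[symmetric])
  qed
  have segp: "seg x < k \<and> b (seg x) \<le> x \<and> x \<le> b (Suc (seg x))" if x: "b 0 \<le> x" "x \<le> b k" for x
  proof -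
    have ex: "x \<le> b (Suc (k - 1))" using x k by simp
    have s1: "x \<le> b (Suc (seg x))" unfolding seg_def by (rule LeastI[of "\<lambda>i. x \<le> b (Suc i)", OF ex])
    have s2: "seg x \<le> k - 1" unfolding seg_def by (rule Least_le[of "\<lambda>i. x \<le> b (Suc i)", OF ex])
    have s3: "b (seg x) \<le> x"
    proof (cases "seg x")
      case 0 then show ?thesis using x by simp
    next
      case (Suc m)
      have "m < seg x" using Suc by simp
      hence "\<not> x \<le> b (Suc m)" unfolding seg_def by (rule not_less_Least)
      then show ?thesis using Suc by simp
    qed
    show ?thesis using s1 s2 s3 k by simp
  qed
  have LLaff: "\<And>i l u v. LL b r i (l * u + (1 - l) * v) = l * LL b r i u + (1 - l) * LL b r i v"
    by (simp add: LL_def algebra_simps)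
  have pt: "(\<forall>j\<le>k. q j t \<ge> 0) \<and> (\<Sum>j\<le>k. q j t) = 1 \<and> buy_cost k b q t = B t \<and>
      rent_rate k r q t = Gm b r (k - 1) (B t) \<and> rent_rate k r q t \<le> rent_rate k r p t \<and>
      ((\<exists>i\<le>k. active k q t = {i}) \<or> (\<exists>i<k. active k q t = {i, Suc i}))" if t: "t \<ge> 0" for t
  proof -
    define x where "x = B t"
    define i where "i = seg x"
    define l where "l = lam x"
    have qf: "\<And>j. q j t = (if j = i then l else if j = Suc i then 1 - l else 0)"
      by (simp add: q_def i_def l_def x_def)
    have xb: "b 0 \<le> x" "x \<le> b k" using bound[OF t] by (auto simp: x_def)
    have ik: "i < k" and bix: "b i \<le> x" and xbi: "x \<le> b (Suc i)" using segp[OF xb] by (auto simp: i_def)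
    have db: "b (Suc i) - b i > 0" using b_mono[OF ik] by simp
    have ld: "l = (b (Suc i) - x) / (b (Suc i) - b i)" by (simp add: l_def lam_def i_def)
    have l0: "0 \<le> l" and l1: "l \<le> 1" using db bix xbi by (auto simp: ld divide_simps)
    have l1': "1 - l = (x - b i) / (b (Suc i) - b i)" using db by (simp add: ld divide_simps)
    have h: "l * (b (Suc i) - b i) = b (Suc i) - x" using db by (simp add: ld)
    have "l * b i + (1 - l) * b (Suc i) = b (Suc i) - l * (b (Suc i) - b i)" by (simp add: algebra_simps)
    hence xcomb: "l * b i + (1 - l) * b (Suc i) = x" using h by linarith
    have sumq: "\<And>f. (\<Sum>j\<le>k. q j t * f j) = l * f i + (1 - l) * f (Suc i)"
      unfolding qf by (rule sum_two[OF ik])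
    have nn: "\<forall>j\<le>k. q j t \<ge> 0" using l0 l1 by (simp add: qf)
    have s1: "(\<Sum>j\<le>k. q j t) = 1" using sumq[of "\<lambda>_. 1"] by simp
    have bq: "buy_cost k b q t = B t" using sumq[of b] xcomb by (simp add: buy_cost_def x_def)
    have "rent_rate k r q t = r i + (1 - l) * (r (Suc i) - r i)"
      using sumq[of r] by (simp add: rent_rate_def algebra_simps)
    also have "\<dots> = LL b r i x" unfolding l1' LL_def mm_def by simp
    finally have rq: "rent_rate k r q t = LL b r i x" .
    have Lmax: "LL b r i' x \<le> LL b r i x" if i': "i' < k" for i'
    proof -
      have "LL b r i' x = l * LL b r i' (b i) + (1 - l) * LL b r i' (b (Suc i))"
        using LLaff xcomb by metis
      also have "\<dots> \<le> l * r i + (1 - l) * r (Suc i)"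
        using LL_below[of k b r, OF _ _ _ i'] b_mono r_mono s_mono ik l0 l1
        by (intro add_mono mult_left_mono) auto
      also have "\<dots> = LL b r i x" using rq sumq[of r] by (simp add: rent_rate_def)
      finally show ?thesis .
    qed
    have rG: "rent_rate k r q t = Gm b r (k - 1) (B t)"
    proof -
      obtain i' where i': "i' \<le> k - 1" "Gm b r (k - 1) x = LL b r i' x" using Gm_attained by blast
      have "LL b r i x \<le> Gm b r (k - 1) x" using ik by (intro Gm_ge) simp
      moreover have "Gm b r (k - 1) x \<le> LL b r i x" using i' Lmax[of i'] k by simp
      ultimately show ?thesis using rq by (simp add: x_def)
    qed
    have pn: "\<And>j. j \<le> k \<Longrightarrow> p j t \<ge> 0" and ps: "(\<Sum>j\<le>k. p j t) = 1"
      using prof t by (auto simp: is_profile_def)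
    have "(\<Sum>j\<le>k. p j t * LL b r i (b j)) \<le> (\<Sum>j\<le>k. p j t * r j)"
      using LL_below[of k b r, OF _ _ _ ik] b_mono r_mono s_mono pn
      by (intro sum_mono mult_left_mono) auto
    moreover have "(\<Sum>j\<le>k. p j t * LL b r i (b j)) = LL b r i x"
    proof -
      have e: "\<And>y. LL b r i y = (r i - b i * mm b r i) + mm b r i * y" by (simp add: LL_def algebra_simps)
      have "(\<Sum>j\<le>k. p j t * LL b r i (b j)) = (r i - b i * mm b r i) * (\<Sum>j\<le>k. p j t) + mm b r i * (\<Sum>j\<le>k. p j t * b j)"
      proof -
        have gen: "\<And>\<alpha> \<beta>. (\<Sum>j\<le>k. p j t * (\<alpha> + \<beta> * b j)) = \<alpha> * (\<Sum>j\<le>k. p j t) + \<beta> * (\<Sum>j\<le>k. p j t * b j)"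
          by (simp add: distrib_left sum.distrib sum_distrib_left mult_ac)
        show ?thesis unfolding e by (rule gen)
      qed
      then show ?thesis using ps by (simp add: e x_def B_def buy_cost_def)
    qed
    ultimately have rle: "rent_rate k r q t \<le> rent_rate k r p t" using rq by (simp add: rent_rate_def)
    have act: "(\<exists>i\<le>k. active k q t = {i}) \<or> (\<exists>i<k. active k q t = {i, Suc i})"
    proof -
      consider "l = 1" | "l = 0" | "0 < l" "l < 1" using l0 l1 by linarith
      then show ?thesis
      proof cases
        case 1
        hence "active k q t = {i}" using ik by (auto simp: active_def qf)
        then show ?thesis using ik by auto
      next
        case 2
        hence "active k q t = {Suc i}" using ik by (auto simp: active_def qf)
        then show ?thesis using ik by (intro disjI1 exI[of _ "Suc i"]) auto
      next
        case 3
        hence "active k q t = {i, Suc i}" using ik by (auto simp: active_def qf)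
        then show ?thesis using ik by auto
      qed
    qed
    show ?thesis using nn s1 bq rG rle act by blast
  qed
  have Bcont: "continuous_on {0..} B"
    unfolding B_def buy_cost_def by (intro continuous_on_sum continuous_on_mult_right p_cont) auto
  have "prudent k q" unfolding prudent_def using pt by blast
  moreover have "competitive k b r c q"
    unfolding competitive_def
  proof (intro conjI allI impI)
    show "is_profile k q" unfolding is_profile_def using pt by blast
  next
    fix t :: real assume t: "t \<ge> 0"
    have "continuous_on {0..t} (\<lambda>s. Gm b r (k - 1) (B s))"
      by (rule continuous_on_compose2[OF Gm_cont continuous_on_subset[OF Bcont]]) auto
    hence "(\<lambda>s. Gm b r (k - 1) (B s)) integrable_on {0..t}" by (rule integrable_continuous_real)
    moreover have eqG: "rent_rate k r q s = Gm b r (k - 1) (B s)" if "s \<in> {0..t}" for s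
    proof -
      have "s \<ge> 0" using that by simp
      from pt[OF this] show ?thesis by blast
    qed
    ultimately show iq: "rent_rate k r q integrable_on {0..t}"
      using integrable_cong[of "{0..t}" "rent_rate k r q" "\<lambda>s. Gm b r (k - 1) (B s)"] by blast
    have le: "rent_rate k r q s \<le> rent_rate k r p s" if "s \<in> {0..t}" for s
    proof -
      have "s \<ge> 0" using that by simp
      from pt[OF this] show ?thesis by blast
    qed
    have "integral {0..t} (rent_rate k r q) \<le> integral {0..t} (rent_rate k r p)"
      using iq comp[OF t] le by (intro integral_le) blast+
    hence "total_cost k b r q t \<le> total_cost k b r p t"
      using pt[OF t] by (simp add: total_cost_def B_def)
    then show "total_cost k b r q t \<le> c * opt k b r t" using comp[OF t] by linarith
  qed
  ultimately show ?thesis by blast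
qed

end
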